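(* Assume $\eta_{\rm ch}^{\rm EES}\eta_{\rm dch}^{\rm EES}<1$ and $\eta_{\rm ch}^{\rm TES}\eta_{\rm dch}^{\rm TES}<1$. Let $X^*$ be an optimal solution of $\mathbf{P2}$ (components denoted with a superscript $*$) such that for every $t\in\mathcal T$ $$\frac{P_t^{\rm res}-P_t^{\rm curt*}}{1-\eta_{\rm ch}^{\rm EES}\eta_{\rm dch}^{\rm EES}}\;\ge\;\min\!\left(P_{\mathrm{ch},t}^{\rm EES*},\ \frac{P_{\mathrm{dch},t}^{\rm EES*}}{\eta_{\rm ch}^{\rm EES}\eta_{\rm dch}^{\rm EES}}\right).$$ Let $\widetilde X^*$ be obtained from $X^*$ by applying, at every $t\in\mathcal T$, the EES equivalent-energy-change (EEC) transform together with the replacement $P_t^{\rm curt*}\mapsto\widetilde P_t^{\rm curt*}=P_t^{\rm curt*}+\Delta P_t^{\rm EES}$, and the TES EEC transform together with the replacement $H_t^{\rm curt*}\mapsto\widetilde H_t^{\rm curt*}=H_t^{\rm curt*}+\Delta H_t^{\rm TES}$ (all other components unchanged). Then $\widetilde X^*$ is an optimal solution of $\mathbf{P1}$, and the optimal values of $\mathbf{P1}$ and $\mathbf{P2}$ coincide.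
   Context: Fix a multi-energy system (MES) and a rolling optimization horizon of periods $t\in\mathcal T=\{t_{\rm c},t_{\rm c}+1,\dots,t_{\rm e}\}$, each of length $\Delta T>0$. Given real data: electricity prices $\mu_{\mathrm{e},t}$ and gas prices $\mu_{\mathrm{g},t}$; forecast renewable (RES) output $P_t^{\mathrm{res}}\ge 0$; fixed electric and thermal loads $L_{\mathrm{e},t},L_{\mathrm{th},t}$; conversion efficiencies $\eta_{\rm ge}^{\rm CHP},\eta_{\rm gth}^{\rm CHP},\eta_{\rm gth}^{\rm GF},\eta_{\rm eth}^{\rm EB}>0$; storage efficiencies $\eta_{\rm ch}^{\rm EES},\eta_{\rm dch}^{\rm EES},\eta_{\rm ch}^{\rm TES},\eta_{\rm dch}^{\rm TES}\in(0,1]$; self-discharge rates $\alpha^{\rm EES},\alpha^{\rm TES}$; current storage energies $E_{t_{\rm c}}^{\rm EES},E_{t_{\rm c}}^{\rm TES}$; and the bounds listed below. Decision variables for each $t\in\mathcal T$: $P_t$ (power imported from the grid; $P_t<0$ means export), gas inputs $G_t^{\rm CHP},G_t^{\rm GF}$, electric boiler input $P_t^{\rm EB}$, electric storage (EES) charging/discharging powers $P_{\mathrm{ch},t}^{\rm EES},P_{\mathrm{dch},t}^{\rm EES}$, thermal storage (TES) charging/discharging amounts $H_{\mathrm{ch},t}^{\rm TES},H_{\mathrm{dch},t}^{\rm TES}$, curtailed RES power $P_t^{\rm curt}$ and curtailed heat $H_t^{\rm curt}$, shiftable loads $L_{\mathrm{e},t}^{\rm sl},L_{\mathrm{th},t}^{\rm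 sl}$. Per-period cost: $F_t=\mu_{\mathrm{e},t}P_t+\mu_{\mathrm{g},t}(G_t^{\rm CHP}+G_t^{\rm GF})$. Define $\Delta E_t^{\rm EES}=\Delta T\,(\eta_{\rm ch}^{\rm EES}P_{\mathrm{ch},t}^{\rm EES}-P_{\mathrm{dch},t}^{\rm EES}/\eta_{\rm dch}^{\rm EES})$ and $\Delta E_t^{\rm TES}=\Delta T\,(\eta_{\rm ch}^{\rm TES}H_{\mathrm{ch},t}^{\rm TES}-H_{\mathrm{dch},t}^{\rm TES}/\eta_{\rm dch}^{\rm TES})$. Constraints (for all $t\in\mathcal T$ unless stated otherwise): (C1) electric balance: $P_t+P_t^{\rm res}+\eta_{\rm ge}^{\rm CHP}G_t^{\rm CHP}-P_t^{\rm EB}+P_{\mathrm{dch},t}^{\rm EES}-P_{\mathrm{ch},t}^{\rm EES}-P_t^{\rm curt}=L_{\mathrm{e},t}^{\rm sl}+L_{\mathrm{e},t}$; (C2) thermal balance: $\eta_{\rm gth}^{\rm CHP}G_t^{\rm CHP}+\eta_{\rm gth}^{\rm GF}G_t^{\rm GF}+\eta_{\rm eth}^{\rm EB}P_t^{\rm EB}+H_{\mathrm{dch},t}^{\rm TES}-H_{\mathrm{ch},t}^{\rm TES}-H_t^{\rm curt}=L_{\mathrm{th},t}^{\rm sl}+L_{\mathrm{th},t}$; (C3) $-\overline P^{\rm out}\le P_t\le\overline P^{\rm in}$ with $\overline P^{\rm out},\overline P^{\rm in}>0$; (C4) $\underline P^{\rm CHP}\le\eta_{\rm ge}^{\rm CHP}G_t^{\rm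 CHP}\le\overline P^{\rm CHP}$, $\underline P^{\rm GF}\le\eta_{\rm gth}^{\rm GF}G_t^{\rm GF}\le\overline P^{\rm GF}$, $\underline P^{\rm EB}\le P_t^{\rm EB}\le\overline P^{\rm EB}$; (C5) ramping, for $t,t+1\in\mathcal T$: $|\eta_{\rm ge}^{\rm CHP}(G_{t+1}^{\rm CHP}-G_t^{\rm CHP})|\le\Delta P^{\rm CHP}$, $|P_{t+1}^{\rm EB}-P_t^{\rm EB}|\le\Delta P^{\rm EB}$; (C6) $0\le P_{\mathrm{ch},t}^{\rm EES}\le\overline P_{\rm ch}^{\rm EES}$, $0\le P_{\mathrm{dch},t}^{\rm EES}\le\overline P_{\rm dch}^{\rm EES}$, $0\le H_{\mathrm{ch},t}^{\rm TES}\le\overline H_{\rm ch}^{\rm TES}$, $0\le H_{\mathrm{dch},t}^{\rm TES}\le\overline H_{\rm dch}^{\rm TES}$; (C7) complementarity: $P_{\mathrm{ch},t}^{\rm EES}P_{\mathrm{dch},t}^{\rm EES}=0$ and $H_{\mathrm{ch},t}^{\rm TES}H_{\mathrm{dch},t}^{\rm TES}=0$; (C8) shiftable loads, for given subsets $\Omega_{\rm e},\Omega_{\rm th}$ of periods and given totals/upper limits: $\sum_{t\in\Omega_{\rm e}}L_{\mathrm{e},t}^{\rm sl}=L_{\rm e}^{\rm sl}$, $0\le L_{\mathrm{e},t}^{\rm sl}\le\overline L_{\rm e}^{\rm sl}$ for $t\in\Omega_{\rm e}$; $\sum_{t\in\Omega_{\rm th}}L_{\mathrm{th},t}^{\rm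 sl}=L_{\rm th}^{\rm sl}$, $0\le L_{\mathrm{th},t}^{\rm sl}\le\overline L_{\rm th}^{\rm sl}$ for $t\in\Omega_{\rm th}$; (C9) $0\le P_t^{\rm curt}\le P_t^{\rm res}$ and $0\le H_t^{\rm curt}$; (C10) energy bounds: $\underline E^{\rm EES}\le(1-\alpha^{\rm EES})E_{t_{\rm c}}^{\rm EES}+\sum_{\tau=t_{\rm c}}^{t}\Delta E_\tau^{\rm EES}\le\overline E^{\rm EES}$ and $\underline E^{\rm TES}\le(1-\alpha^{\rm TES})E_{t_{\rm c}}^{\rm TES}+\sum_{\tau=t_{\rm c}}^{t}\Delta E_\tau^{\rm TES}\le\overline E^{\rm TES}$; (C11) target energy: $E_{t_{\rm c}}^{\rm EES}+\sum_{\tau=t_{\rm c}}^{t_{\rm e}}\Delta E_\tau^{\rm EES}=E_{\rm targ}^{\rm EES}$ and $E_{t_{\rm c}}^{\rm TES}+\sum_{\tau=t_{\rm c}}^{t_{\rm e}}\Delta E_\tau^{\rm TES}=E_{\rm targ}^{\rm TES}$. Problem $\mathbf{P1}$: minimize $\sum_{t\in\mathcal T}F_t$ subject to (C1)–(C11). Problem $\mathbf{P2}$ (the relaxation): minimize $\sum_{t\in\mathcal T}F_t$ subject to (C1)–(C6) and (C8)–(C11), i.e. $\mathbf{P1}$ with the complementarity constraints (C7) removed; $\mathbf{P2}$ is a linear program. EEC transform for the EES at period $t$: given $(P_{\mathrm{ch},t}^{\rm EES*},P_{\mathrm{dch},t}^{\rm EES*})$ with energy change $\Delta E_t^{\rm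 EES*}$ (computed by the formula above), set $(\widetilde P_{\mathrm{ch},t}^{\rm EES*},\widetilde P_{\mathrm{dch},t}^{\rm EES*})=\big(\Delta E_t^{\rm EES*}/(\eta_{\rm ch}^{\rm EES}\Delta T),\,0\big)$ if $\Delta E_t^{\rm EES*}\ge0$, and $=\big(0,\,-\Delta E_t^{\rm EES*}\eta_{\rm dch}^{\rm EES}/\Delta T\big)$ if $\Delta E_t^{\rm EES*}<0$; and let $\Delta P_t^{\rm EES}=(\widetilde P_{\mathrm{dch},t}^{\rm EES*}-\widetilde P_{\mathrm{ch},t}^{\rm EES*})-(P_{\mathrm{dch},t}^{\rm EES*}-P_{\mathrm{ch},t}^{\rm EES*})$ be the resulting change of net discharge power. The TES EEC transform is defined identically with $H_{\mathrm{ch},t}^{\rm TES*},H_{\mathrm{dch},t}^{\rm TES*},\Delta E_t^{\rm TES*},\eta_{\rm ch}^{\rm TES},\eta_{\rm dch}^{\rm TES}$ in place of the EES quantities, producing $\widetilde H_{\mathrm{ch},t}^{\rm TES*},\widetilde H_{\mathrm{dch},t}^{\rm TES*}$, with $\Delta H_t^{\rm TES}=(\widetilde H_{\mathrm{dch},t}^{\rm TES*}-\widetilde H_{\mathrm{ch},t}^{\rm TES*})-(H_{\mathrm{dch},t}^{\rm TES*}-H_{\mathrm{ch},t}^{\rm TES*})$. *)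

theory Defs
  imports Complex_Main
begin

record mes_params =
  dT :: real
  mu_e :: "nat \<Rightarrow> real"
  mu_g :: "nat \<Rightarrow> real"
  Pres :: "nat \<Rightarrow> real"
  Le :: "nat \<Rightarrow> real"
  Lth :: "nat \<Rightarrow> real"
  eta_ge_chp :: real
  eta_gth_chp :: real
  eta_gth_gf :: real
  eta_eth_eb :: real
  eta_ch_ees :: real
  eta_dch_ees :: real
  eta_ch_tes :: real
  eta_dch_tes :: real
  alpha_ees :: real
  alpha_tes :: real
  E0_ees :: real
  E0_tes :: real
  Pout_max :: real
  Pin_max :: real
  Pchp_min :: real
  Pchp_max :: real
  Pgf_min :: real
  Pgf_max :: real
  Peb_min :: real
  Peb_max :: real
  dPchp :: real
  dPeb :: real
  Pch_ees_max :: real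
  Pdch_ees_max :: real
  Hch_tes_max :: real
  Hdch_tes_max :: real
  Omega_e :: "nat set"
  Omega_th :: "nat set"
  Lsl_e_tot :: real
  Lsl_e_max :: real
  Lsl_th_tot :: real
  Lsl_th_max :: real
  Emin_ees :: real
  Emax_ees :: real
  Emin_tes :: real
  Emax_tes :: real
  Etarg_ees :: real
  Etarg_tes :: real
  tc :: nat
  te :: nat

record mes_sol =
  Pgrid :: "nat \<Rightarrow> real"
  Gchp :: "nat \<Rightarrow> real"
  Ggf :: "nat \<Rightarrow> real"
  Peb :: "nat \<Rightarrow> real"
  Pch :: "nat \<Rightarrow> real"
  Pdch :: "nat \<Rightarrow> real"
  Hch :: "nat \<Rightarrow> real"
  Hdch :: "nat \<Rightarrow> real"
  Pcurt :: "nat \<Rightarrow> real"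
  Hcurt :: "nat \<Rightarrow> real"
  Lsl_e :: "nat \<Rightarrow> real"
  Lsl_th :: "nat \<Rightarrow> real"

definition horizon :: "mes_params \<Rightarrow> nat set" where
  "horizon p = {tc p..te p}"

definition params_ok :: "mes_params \<Rightarrow> bool" where
  "params_ok p \<longleftrightarrow>
     tc p \<le> te p \<and> dT p > 0 \<and>
     (\<forall>t\<in>horizon p. Pres p t \<ge> 0) \<and>
     eta_ge_chp p > 0 \<and> eta_gth_chp p > 0 \<and> eta_gth_gf p > 0 \<and> eta_eth_eb p > 0 \<and>
     0 < eta_ch_ees p \<and> eta_ch_ees p \<le> 1 \<and> 0 < eta_dch_ees p \<and> eta_dch_ees p \<le> 1 \<and>
     0 < eta_ch_tes p \<and> eta_ch_tes p \<le> 1 \<and> 0 < eta_dch_tes p \<and> eta_dch_tes p \<le> 1 \<and>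
     Pout_max p > 0 \<and> Pin_max p > 0 \<and>
     Omega_e p \<subseteq> horizon p \<and> Omega_th p \<subseteq> horizon p"

definition dE_ees :: "mes_params \<Rightarrow> mes_sol \<Rightarrow> nat \<Rightarrow> real" where
  "dE_ees p X t = dT p * (eta_ch_ees p * Pch X t - Pdch X t / eta_dch_ees p)"

definition dE_tes :: "mes_params \<Rightarrow> mes_sol \<Rightarrow> nat \<Rightarrow> real" where
  "dE_tes p X t = dT p * (eta_ch_tes p * Hch X t - Hdch X t / eta_dch_tes p)"

definition cost :: "mes_params \<Rightarrow> mes_sol \<Rightarrow> real" where
  "cost p X = (\<Sum>t\<in>horizon p. mu_e p t * Pgrid X t + mu_g p t * (Gchp X t + Ggf X t))"

definition feasible_P2 :: "mes_params \<Rightarrow> mes_sol \<Rightarrow> bool" where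
  "feasible_P2 p X \<longleftrightarrow>
    (\<forall>t\<in>horizon p.
       \<comment> \<open>C1\<close>
       Pgrid X t + Pres p t + eta_ge_chp p * Gchp X t - Peb X t + Pdch X t - Pch X t - Pcurt X t
         = Lsl_e X t + Le p t \<and>
       \<comment> \<open>C2\<close>
       eta_gth_chp p * Gchp X t + eta_gth_gf p * Ggf X t + eta_eth_eb p * Peb X t
         + Hdch X t - Hch X t - Hcurt X t = Lsl_th X t + Lth p t \<and>
       \<comment> \<open>C3\<close>
       - Pout_max p \<le> Pgrid X t \<and> Pgrid X t \<le> Pin_max p \<and>
       \<comment> \<open>C4\<close>
       Pchp_min p \<le> eta_ge_chp p * Gchp X t \<and> eta_ge_chp p * Gchp X t \<le> Pchp_max p \<and>
       Pgf_min p \<le> eta_gth_gf p * Ggf X t \<and> eta_gth_gf p * Ggf X t \<le> Pgf_max p \<and>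
       Peb_min p \<le> Peb X t \<and> Peb X t \<le> Peb_max p \<and>
       \<comment> \<open>C6\<close>
       0 \<le> Pch X t \<and> Pch X t \<le> Pch_ees_max p \<and> 0 \<le> Pdch X t \<and> Pdch X t \<le> Pdch_ees_max p \<and>
       0 \<le> Hch X t \<and> Hch X t \<le> Hch_tes_max p \<and> 0 \<le> Hdch X t \<and> Hdch X t \<le> Hdch_tes_max p \<and>
       \<comment> \<open>C9\<close>
       0 \<le> Pcurt X t \<and> Pcurt X t \<le> Pres p t \<and> 0 \<le> Hcurt X t \<and>
       \<comment> \<open>C10\<close>
       Emin_ees p \<le> (1 - alpha_ees p) * E0_ees p + (\<Sum>\<tau>\<in>{tc p..t}. dE_ees p X \<tau>) \<and>
       (1 - alpha_ees p) * E0_ees p + (\<Sum>\<tau>\<in>{tc p..t}. dE_ees p X \<tau>) \<le> Emax_ees p \<and>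
       Emin_tes p \<le> (1 - alpha_tes p) * E0_tes p + (\<Sum>\<tau>\<in>{tc p..t}. dE_tes p X \<tau>) \<and>
       (1 - alpha_tes p) * E0_tes p + (\<Sum>\<tau>\<in>{tc p..t}. dE_tes p X \<tau>) \<le> Emax_tes p) \<and>
    \<comment> \<open>C5 (ramping), for t, t+1 in the horizon\<close>
    (\<forall>t. t \<in> horizon p \<and> t + 1 \<in> horizon p \<longrightarrow>
       \<bar>eta_ge_chp p * (Gchp X (t + 1) - Gchp X t)\<bar> \<le> dPchp p \<and>
       \<bar>Peb X (t + 1) - Peb X t\<bar> \<le> dPeb p) \<and>
    \<comment> \<open>C8 (shiftable loads)\<close>
    (\<Sum>t\<in>Omega_e p. Lsl_e X t) = Lsl_e_tot p \<and>
    (\<forall>t\<in>Omega_e p. 0 \<le> Lsl_e X t \<and> Lsl_e X t \<le> Lsl_e_max p) \<and>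
    (\<Sum>t\<in>Omega_th p. Lsl_th X t) = Lsl_th_tot p \<and>
    (\<forall>t\<in>Omega_th p. 0 \<le> Lsl_th X t \<and> Lsl_th X t \<le> Lsl_th_max p) \<and>
    \<comment> \<open>C11 (target energy)\<close>
    E0_ees p + (\<Sum>\<tau>\<in>horizon p. dE_ees p X \<tau>) = Etarg_ees p \<and>
    E0_tes p + (\<Sum>\<tau>\<in>horizon p. dE_tes p X \<tau>) = Etarg_tes p"

definition complementary :: "mes_params \<Rightarrow> mes_sol \<Rightarrow> bool" where
  "complementary p X \<longleftrightarrow>
    (\<forall>t\<in>horizon p. Pch X t * Pdch X t = 0 \<and> Hch X t * Hdch X t = 0)"

definition feasible_P1 :: "mes_params \<Rightarrow> mes_sol \<Rightarrow> bool" where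
  "feasible_P1 p X \<longleftrightarrow> feasible_P2 p X \<and> complementary p X"

definition optimal_P1 :: "mes_params \<Rightarrow> mes_sol \<Rightarrow> bool" where
  "optimal_P1 p X \<longleftrightarrow> feasible_P1 p X \<and> (\<forall>Y. feasible_P1 p Y \<longrightarrow> cost p X \<le> cost p Y)"

definition optimal_P2 :: "mes_params \<Rightarrow> mes_sol \<Rightarrow> bool" where
  "optimal_P2 p X \<longleftrightarrow> feasible_P2 p X \<and> (\<forall>Y. feasible_P2 p Y \<longrightarrow> cost p X \<le> cost p Y)"

definition opt_value_P1 :: "mes_params \<Rightarrow> real" where
  "opt_value_P1 p = (INF Y\<in>{Y. feasible_P1 p Y}. cost p Y)"

definition opt_value_P2 :: "mes_params \<Rightarrow> real" where
  "opt_value_P2 p = (INF Y\<in>{Y. feasible_P2 p Y}. cost p Y)"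

definition eec :: "real \<Rightarrow> real \<Rightarrow> real \<Rightarrow> real \<Rightarrow> real \<Rightarrow> real \<times> real" where
  "eec dt ec ed ch dch =
     (let dE = dt * (ec * ch - dch / ed) in
      if dE \<ge> 0 then (dE / (ec * dt), 0) else (0, - dE * ed / dt))"

definition eec_ees :: "mes_params \<Rightarrow> mes_sol \<Rightarrow> nat \<Rightarrow> real \<times> real" where
  "eec_ees p X t = eec (dT p) (eta_ch_ees p) (eta_dch_ees p) (Pch X t) (Pdch X t)"

definition eec_tes :: "mes_params \<Rightarrow> mes_sol \<Rightarrow> nat \<Rightarrow> real \<times> real" where
  "eec_tes p X t = eec (dT p) (eta_ch_tes p) (eta_dch_tes p) (Hch X t) (Hdch X t)"

definition dP_ees :: "mes_params \<Rightarrow> mes_sol \<Rightarrow> nat \<Rightarrow> real" where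
  "dP_ees p X t = (snd (eec_ees p X t) - fst (eec_ees p X t)) - (Pdch X t - Pch X t)"

definition dH_tes :: "mes_params \<Rightarrow> mes_sol \<Rightarrow> nat \<Rightarrow> real" where
  "dH_tes p X t = (snd (eec_tes p X t) - fst (eec_tes p X t)) - (Hdch X t - Hch X t)"

definition eec_transform :: "mes_params \<Rightarrow> mes_sol \<Rightarrow> mes_sol" where
  "eec_transform p X = X\<lparr>
     Pch := (\<lambda>t. fst (eec_ees p X t)),
     Pdch := (\<lambda>t. snd (eec_ees p X t)),
     Pcurt := (\<lambda>t. Pcurt X t + dP_ees p X t),
     Hch := (\<lambda>t. fst (eec_tes p X t)),
     Hdch := (\<lambda>t. snd (eec_tes p X t)),
     Hcurt := (\<lambda>t. Hcurt X t + dH_tes p X t)\<rparr>"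

end

theory Submission imports Defs begin
lemma eec_fst_nonneg:
  assumes "dt>0" "ec>0" "ed>0" "ch\<ge>0" "dch\<ge>0"
  shows "fst (eec dt ec ed ch dch) \<ge> 0" "snd (eec dt ec ed ch dch) \<ge> 0"
    "fst (eec dt ec ed ch dch) \<le> ch" "snd (eec dt ec ed ch dch) \<le> dch"
    "fst (eec dt ec ed ch dch) * snd (eec dt ec ed ch dch) = 0"
    "dt * (ec * fst (eec dt ec ed ch dch) - snd (eec dt ec ed ch dch) / ed) = dt * (ec * ch - dch / ed)"
  using assms by (auto simp: eec_def Let_def field_simps)

lemma eec_dP:
  assumes "dt>0" "ec>0" "ed>0" "ec*ed<1" "ch\<ge>0" "dch\<ge>0"
  shows "(snd (eec dt ec ed ch dch) - fst (eec dt ec ed ch dch)) - (dch - ch) \<ge> 0"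
    "(snd (eec dt ec ed ch dch) - fst (eec dt ec ed ch dch)) - (dch - ch) \<le> (1 - ec*ed) * min ch (dch/(ec*ed))"
proof -
  have h: "ec*ed>0" using assms by simp
  show "(snd (eec dt ec ed ch dch) - fst (eec dt ec ed ch dch)) - (dch - ch) \<ge> 0"
  proof (cases "dt * (ec * ch - dch / ed) \<ge> 0")
    case True
    have "dch \<le> dch / (ec*ed)" using assms h by (simp add: le_divide_eq mult_left_le order_less_imp_le)
    then show ?thesis using True assms by (simp add: eec_def Let_def field_simps)
  next
    case False
    have "ec*ed*ch \<le> ch" using assms by (simp add: mult_left_le_one_le order_less_imp_le h)
    hence "(dt*ed)*(ec*ed*ch) \<le> (dt*ed)*ch" using assms by (intro mult_left_mono) auto
    then show ?thesis using False assms by (simp add: eec_def Let_def field_simps)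
  qed
  show "(snd (eec dt ec ed ch dch) - fst (eec dt ec ed ch dch)) - (dch - ch) \<le> (1 - ec*ed) * min ch (dch/(ec*ed))"
  proof (cases "dt * (ec * ch - dch / ed) \<ge> 0")
    case True
    hence "ec*ch \<ge> dch/ed" using assms by (simp add: zero_le_mult_iff)
    hence m: "dch/(ec*ed) \<le> ch" using assms h by (simp add: field_simps)
    have "(snd (eec dt ec ed ch dch) - fst (eec dt ec ed ch dch)) - (dch - ch) = (1 - ec*ed) * (dch/(ec*ed))"
      using True assms by (simp add: eec_def Let_def field_simps)
    then show ?thesis using m by (simp add: min_def)
  next
    case False
    hence "ec*ch < dch/ed" using assms by (simp add: zero_le_mult_iff)
    hence m: "ch \<le> dch/(ec*ed)" using assms h by (simp add: field_simps)
    have "(snd (eec dt ec ed ch dch) - fst (eec dt ec ed ch dch)) - (dch - ch) = (1 - ec*ed) * ch"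
      using False assms by (simp add: eec_def Let_def field_simps)
    then show ?thesis using m by (simp add: min_def)
  qed
qed

lemma eec_dE:
  assumes "dt>0" "ec>0" "ed>0"
  shows "dt * (ec * fst (eec dt ec ed ch dch) - snd (eec dt ec ed ch dch) / ed) = dt * (ec * ch - dch / ed)"
  using assms by (auto simp: eec_def Let_def field_simps)

lemma INF_eq_min:
  fixes f :: "'a \<Rightarrow> real"
  assumes "x \<in> S" "\<And>y. y \<in> S \<Longrightarrow> f x \<le> f y"
  shows "(INF y\<in>S. f y) = f x"
  using assms by (intro cInf_eq_minimum) auto

theorem theorem2:
  assumes "params_ok p"
    and "eta_ch_ees p * eta_dch_ees p < 1"
    and "eta_ch_tes p * eta_dch_tes p < 1"
    and "optimal_P2 p X"
    and "\<forall>t\<in>horizon p.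
           (Pres p t - Pcurt X t) / (1 - eta_ch_ees p * eta_dch_ees p)
             \<ge> min (Pch X t) (Pdch X t / (eta_ch_ees p * eta_dch_ees p))"
  shows "optimal_P1 p (eec_transform p X) \<and> opt_value_P1 p = opt_value_P2 p"
proof -
  define Y where "Y = eec_transform p X"
  have P: "dT p > 0" "eta_ch_ees p > 0" "eta_dch_ees p > 0" "eta_ch_tes p > 0" "eta_dch_tes p > 0"
    using assms(1) by (auto simp: params_ok_def)
  have F: "feasible_P2 p X" and opt: "\<And>Z. feasible_P2 p Z \<Longrightarrow> cost p X \<le> cost p Z"
    using assms(4) by (auto simp: optimal_P2_def)
  have dE1: "dE_ees p Y = dE_ees p X"
    using eec_dE[OF P(1,2,3)] by (auto simp: fun_eq_iff dE_ees_def Y_def eec_transform_def eec_ees_def)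
  have dE2: "dE_tes p Y = dE_tes p X"
    using eec_dE[OF P(1,4,5)] by (auto simp: fun_eq_iff dE_tes_def Y_def eec_transform_def eec_tes_def)
  have same: "Pgrid Y = Pgrid X" "Gchp Y = Gchp X" "Ggf Y = Ggf X" "Peb Y = Peb X"
     "Lsl_e Y = Lsl_e X" "Lsl_th Y = Lsl_th X"
    by (auto simp: Y_def eec_transform_def)
  have bal: "\<And>t. Pdch Y t - Pch Y t - Pcurt Y t = Pdch X t - Pch X t - Pcurt X t"
     "\<And>t. Hdch Y t - Hch Y t - Hcurt Y t = Hdch X t - Hch X t - Hcurt X t"
    by (auto simp: Y_def eec_transform_def dP_ees_def dH_tes_def)
  have pt: "0 \<le> Pch Y t \<and> Pch Y t \<le> Pch_ees_max p \<and> 0 \<le> Pdch Y t \<and> Pdch Y t \<le> Pdch_ees_max p \<and>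
       0 \<le> Hch Y t \<and> Hch Y t \<le> Hch_tes_max p \<and> 0 \<le> Hdch Y t \<and> Hdch Y t \<le> Hdch_tes_max p \<and>
       0 \<le> Pcurt Y t \<and> Pcurt Y t \<le> Pres p t \<and> 0 \<le> Hcurt Y t \<and>
       Pch Y t * Pdch Y t = 0 \<and> Hch Y t * Hdch Y t = 0" if t: "t \<in> horizon p" for t
  proof -
    have Ft: "0 \<le> Pch X t" "Pch X t \<le> Pch_ees_max p" "0 \<le> Pdch X t" "Pdch X t \<le> Pdch_ees_max p"
       "0 \<le> Hch X t" "Hch X t \<le> Hch_tes_max p" "0 \<le> Hdch X t" "Hdch X t \<le> Hdch_tes_max p"
       "0 \<le> Pcurt X t" "Pcurt X t \<le> Pres p t" "0 \<le> Hcurt X t"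
      using F t unfolding feasible_P2_def by blast+
    note e1 = eec_fst_nonneg[OF P(1,2,3) Ft(1,3)]
    note e2 = eec_fst_nonneg[OF P(1,4,5) Ft(5,7)]
    note d1 = eec_dP[OF P(1,2,3) assms(2) Ft(1,3)]
    note d2 = eec_dP[OF P(1,4,5) assms(3) Ft(5,7)]
    have h5: "min (Pch X t) (Pdch X t / (eta_ch_ees p * eta_dch_ees p)) \<le> (Pres p t - Pcurt X t) / (1 - eta_ch_ees p * eta_dch_ees p)"
      using assms(5) t by auto
    have "(1 - eta_ch_ees p * eta_dch_ees p) * min (Pch X t) (Pdch X t / (eta_ch_ees p * eta_dch_ees p)) \<le> Pres p t - Pcurt X t"
      using h5 assms(2) by (simp add: le_divide_eq mult.commute)
    then show ?thesis using Ft e1 e2 d1 d2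
      by (auto simp: Y_def eec_transform_def dP_ees_def dH_tes_def eec_ees_def eec_tes_def)
  qed
  have FY: "feasible_P2 p Y"
    using F pt bal unfolding feasible_P2_def dE1 dE2 same
    by (smt (verit))
  have CY: "complementary p Y" using pt by (auto simp: complementary_def)
  have cY: "cost p Y = cost p X" by (simp add: cost_def same)
  have F1: "feasible_P1 p Z \<Longrightarrow> feasible_P2 p Z" for Z by (simp add: feasible_P1_def)
  have o1: "optimal_P1 p Y"
    unfolding optimal_P1_def feasible_P1_def using FY CY cY opt F1 by auto
  have v1: "opt_value_P1 p = cost p Y"
    unfolding opt_value_P1_def
    by (rule INF_eq_min) (use FY CY cY opt F1 in \<open>auto simp: feasible_P1_def\<close>)
  have v2: "opt_value_P2 p = cost p X"
    unfolding opt_value_P2_def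
    by (rule INF_eq_min) (use F opt in auto)
  show ?thesis using o1 v1 v2 cY Y_def by simp
qed
end
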